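(* For every integer $n \geq 2$ there is an MSyDS $\mathcal{S}_n$ with $n$ nodes (and some finite number of layers), in which every local function is a threshold function and every master function is a symmetric Boolean function, whose phase space consists of a single cycle of length $2^n$.
   Context: A multilayer synchronous dynamical system (MSyDS) $\mathcal{S}$ over $\mathbb{B}=\{0,1\}$ with $k\ge 1$ layers consists of: a finite node set $V$ with $n$ nodes; undirected simple graphs $G_i=(V,E_i)$, $1\le i\le k$ (all layers share the node set $V$); for each layer $i$ and node $v$ a local function $f_{i,v}$ with output in $\mathbb{B}$ whose inputs are the states of the nodes in the closed neighborhood of $v$ in $G_i$ ($v$ and its neighbors in $G_i$); and for each node $v$ a master function $\psi_v:\mathbb{B}^k\to\mathbb{B}$. A configuration is a map $\mathcal{C}:V\to\mathbb{B}$. The successor of $\mathcal{C}$ is the configuration $\mathcal{C}'$ with $\mathcal{C}'(v)=\psi_v(f_{1,v}(\mathcal{C}),\dots,f_{k,v}(\mathcal{C}))$ for every $v$ (synchronous update), where $f_{i,v}(\mathcal{C})$ is $f_{i,v}$ evaluated on the states in $\mathcal{C}$ of the closed neighborhood of $v$ in $G_i$. The phase space is the directed graph on the $2^n$ configurations with an arc from each configuration to its successor. For an integer $\tau\ge0$, the $\tau$-threshold function equals 1 iff at least $\tau$ of its inputs equal 1 (a threshold larger than the number of inputs gives the constant-0 function); a threshold function is a $\tau$-threshold function for some $\tau\ge 0$. A Boolean function is symmetric if its value depends only on the number of 1's among its inputs. *)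

theory Defs
  imports Main
begin

(* Nodes are 0..<n, layers are 0..<k.
   E i u v : u,v adjacent in layer graph G_i.
   f i v   : local function of node v in layer i, applied to a whole configuration
             (required to depend only on the closed neighbourhood of v in G_i).
   \<psi> v x   : master function of node v applied to the vector x of layer outputs,
             indexed by 0..<k (required to depend only on x 0 .. x (k-1)). *)

definition configs :: "nat \<Rightarrow> (nat \<Rightarrow> bool) set" where
  "configs n = {C. \<forall>u. n \<le> u \<longrightarrow> \<not> C u}"

definition cnbhd :: "(nat \<Rightarrow> nat \<Rightarrow> nat \<Rightarrow> bool) \<Rightarrow> nat \<Rightarrow> nat \<Rightarrow> nat set" where
  "cnbhd E i v = {u. u = v \<or> E i v u}"

definition is_msyds ::
  "nat \<Rightarrow> nat \<Rightarrow> (nat \<Rightarrow> nat \<Rightarrow> nat \<Rightarrow> bool) \<Rightarrow> (nat \<Rightarrow> nat \<Rightarrow> (nat \<Rightarrow> bool) \<Rightarrow> bool)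
     \<Rightarrow> (nat \<Rightarrow> (nat \<Rightarrow> bool) \<Rightarrow> bool) \<Rightarrow> bool" where
  "is_msyds n k E f \<psi> \<longleftrightarrow>
     1 \<le> k \<and>
     (\<forall>i<k. \<forall>u v. E i u v \<longrightarrow> u < n \<and> v < n \<and> u \<noteq> v \<and> E i v u) \<and>
     (\<forall>i<k. \<forall>v<n. \<forall>C D. (\<forall>u\<in>cnbhd E i v. C u = D u) \<longrightarrow> f i v C = f i v D) \<and>
     (\<forall>v<n. \<forall>x y. (\<forall>i<k. x i = y i) \<longrightarrow> \<psi> v x = \<psi> v y)"

definition succ_conf ::
  "nat \<Rightarrow> (nat \<Rightarrow> nat \<Rightarrow> (nat \<Rightarrow> bool) \<Rightarrow> bool) \<Rightarrow> (nat \<Rightarrow> (nat \<Rightarrow> bool) \<Rightarrow> bool)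
     \<Rightarrow> (nat \<Rightarrow> bool) \<Rightarrow> (nat \<Rightarrow> bool)" where
  "succ_conf n f \<psi> C = (\<lambda>v. v < n \<and> \<psi> v (\<lambda>i. f i v C))"

definition is_threshold_local ::
  "(nat \<Rightarrow> nat \<Rightarrow> nat \<Rightarrow> bool) \<Rightarrow> nat \<Rightarrow> nat \<Rightarrow> ((nat \<Rightarrow> bool) \<Rightarrow> bool) \<Rightarrow> bool" where
  "is_threshold_local E i v g \<longleftrightarrow>
     (\<exists>\<tau>::nat. \<forall>C. g C = (\<tau> \<le> card {u \<in> cnbhd E i v. C u}))"

definition symmetric_fun :: "nat \<Rightarrow> ((nat \<Rightarrow> bool) \<Rightarrow> bool) \<Rightarrow> bool" where
  "symmetric_fun k g \<longleftrightarrow>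
     (\<forall>x y. card {i. i < k \<and> x i} = card {i. i < k \<and> y i} \<longrightarrow> g x = g y)"

definition phase_space_single_cycle ::
  "nat \<Rightarrow> ((nat \<Rightarrow> bool) \<Rightarrow> (nat \<Rightarrow> bool)) \<Rightarrow> bool" where
  "phase_space_single_cycle n F \<longleftrightarrow>
     (\<exists>C0 \<in> configs n. (F ^^ (2 ^ n)) C0 = C0 \<and>
        {(F ^^ j) C0 | j. j < 2 ^ n} = configs n \<and>
        inj_on (\<lambda>j. (F ^^ j) C0) {..<2 ^ n})"

end

theory Submission
  imports Defs
begin

lemma inc: "bit (Suc m) v \<longleftrightarrow> (bit m v \<noteq> (\<forall>u<v. bit m u))"
proof (induction v arbitrary: m)
  case 0 then show ?case by (simp add: bit_0)
next
  case (Suc v)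
  show ?case
  proof (cases "odd m")
    case True
    then have "Suc m div 2 = Suc (m div 2)" by presburger
    moreover have "(\<forall>u<Suc v. bit m u) = (\<forall>u<v. bit (m div 2) u)"
      using True by (auto simp: bit_Suc bit_0 less_Suc_eq_0_disj)
    ultimately show ?thesis using Suc.IH[of "m div 2"] by (simp add: bit_Suc)
  next
    case False
    then have "Suc m div 2 = m div 2" by presburger
    then show ?thesis using False by (auto simp: bit_Suc bit_0)
  qed
qed

lemma small: "(j::nat) < 2^n \<Longrightarrow> n \<le> w \<Longrightarrow> \<not> bit j w"
  by (metis bit_take_bit_iff dual_order.strict_iff_not take_bit_nat_eq_self_iff)

lemma ext2: "(m::nat) < 2^n \<Longrightarrow> bit (m + 2^n) v = (bit m v \<or> v = n)"
  by (metis bit_disjunctive_add_iff bit_exp_iff bit_take_bit_iff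
    less_nat_zero_code nat_less_le possible_bit_def take_bit_nat_eq_self)

definition bitsn :: "nat \<Rightarrow> nat \<Rightarrow> nat \<Rightarrow> bool" where
  "bitsn n m = (\<lambda>v. v < n \<and> bit m v)"

lemma surj_bits: "C \<in> configs n \<Longrightarrow> \<exists>m<2^n. C = bitsn n m"
proof (induction n arbitrary: C)
  case 0
  then show ?case by (auto simp: configs_def bitsn_def fun_eq_iff)
next
  case (Suc n)
  have "C(n := False) \<in> configs n" using Suc.prems by (auto simp: configs_def)
  then obtain m where m: "m < 2^n" "C(n := False) = bitsn n m" using Suc.IH by blast
  have mv: "\<And>x. x \<noteq> n \<Longrightarrow> C x = bitsn n m x" using m(2) by (metis fun_upd_other)
  show ?case
  proof (cases "C n")
    case True
    have "C = bitsn (Suc n) (m + 2^n)"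
    proof
      fix v show "C v = bitsn (Suc n) (m + 2 ^ n) v"
        using mv[of v] m True Suc.prems small[OF m(1)]
        by (cases "v = n") (auto simp: ext2 bitsn_def configs_def less_Suc_eq)
    qed
    then show ?thesis using m(1) by (intro exI[of _ "m + 2^n"]) auto
  next
    case False
    have "C = bitsn (Suc n) m"
    proof
      fix v show "C v = bitsn (Suc n) m v"
        using mv[of v] m False Suc.prems small[OF m(1)]
        by (cases "v = n") (auto simp: bitsn_def configs_def less_Suc_eq)
    qed
    then show ?thesis using m(1) by (intro exI[of _ m]) auto
  qed
qed

definition EE :: "nat \<Rightarrow> nat \<Rightarrow> nat \<Rightarrow> nat \<Rightarrow> bool" where
  "EE n i u w = (i < 2*n \<and> u \<le> i mod n \<and> w \<le> i mod n \<and> u \<noteq> w)"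

definition tau :: "nat \<Rightarrow> nat \<Rightarrow> nat \<Rightarrow> nat" where
  "tau n i v = (if i = v then v+1 else if i = n+v then v else if i = 2*n then 1 else n+2)"

definition ff :: "nat \<Rightarrow> nat \<Rightarrow> nat \<Rightarrow> (nat \<Rightarrow> bool) \<Rightarrow> bool" where
  "ff n i v C = (tau n i v \<le> card {u \<in> cnbhd (EE n) i v. C u})"

definition pp :: "nat \<Rightarrow> nat \<Rightarrow> (nat \<Rightarrow> bool) \<Rightarrow> bool" where
  "pp n v x = (card {i. i < 2*n+1 \<and> x i} \<in> {1,2})"

lemma card_all: "card {u. u < (v::nat) \<and> C u} = v \<longleftrightarrow> (\<forall>u<v. C u)"
proof
  assume h: "card {u. u < v \<and> C u} = v"
  have "{u. u < v \<and> C u} = {..<v}"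
    by (rule card_subset_eq) (use h in auto)
  then show "\<forall>u<v. C u" by auto
next
  assume "\<forall>u<v. C u"
  then have "{u. u < v \<and> C u} = {..<v}" by auto
  then show "card {u. u < v \<and> C u} = v" by simp
qed

lemma card_le: "card {u. u < (v::nat) \<and> C u} \<le> v"
  by (metis (no_types, lifting) card_lessThan card_mono finite_lessThan lessThan_iff mem_Collect_eq subsetI)

lemma step:
  assumes n: "2 \<le> n" and v: "v < n"
  shows "succ_conf n (ff n) (pp n) C v = (C v \<noteq> (\<forall>u<v. C u))"
proof -
  have c1: "cnbhd (EE n) v v = {..v}" using v by (auto simp: cnbhd_def EE_def)
  have c2: "cnbhd (EE n) (n+v) v = {..v}" using v by (auto simp: cnbhd_def EE_def)
  have c3: "cnbhd (EE n) (2*n) v = {v}" using v by (auto simp: cnbhd_def EE_def)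
  have sub: "cnbhd (EE n) i v \<subseteq> {..<n}" for i
    using v n by (auto simp: cnbhd_def EE_def) (meson le_less_trans mod_less_divisor not_less not_numeral_le_zero order.strict_trans2 zero_less_iff_neq_zero)
  have other: "\<not> ff n i v C" if "i \<noteq> v" "i \<noteq> n+v" "i \<noteq> 2*n" for i
  proof -
    have "card {u \<in> cnbhd (EE n) i v. C u} \<le> card {..<n}"
      by (rule card_mono) (use sub in auto)
    then show ?thesis using that by (simp add: ff_def tau_def)
  qed
  define S where "S = card {u. u < v \<and> C u}"
  have Sle: "S \<le> v" using card_le S_def by simp
  have Sall: "S = v \<longleftrightarrow> (\<forall>u<v. C u)" using card_all S_def by simp
  have cv: "card {u \<in> {..v}. C u} = S + (if C v then 1 else 0)"
  proof -
    have "{u \<in> {..v}. C u} = {u. u < v \<and> C u} \<union> (if C v then {v} else {})" by (auto simp: le_less)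
    then show ?thesis by (simp add: S_def)
  qed
  define A where "A = (v+1 \<le> S + (if C v then 1 else 0))"
  define B where "B = (v \<le> S + (if C v then 1 else 0))"
  have fv: "ff n v v C = A" using c1 cv by (simp add: ff_def tau_def A_def)
  have fnv: "ff n (n+v) v C = B" using c2 cv v by (simp add: ff_def tau_def B_def)
  have "{u \<in> {v}. C u} = (if C v then {v} else {})" by auto
  then have f2n: "ff n (2*n) v C = C v" using c3 v by (simp add: ff_def tau_def)
  have d: "v \<noteq> n+v" "v \<noteq> 2*n" "n+v \<noteq> 2*n" using v n by auto
  have set: "{i. i < 2*n+1 \<and> ff n i v C} =
     (if A then {v} else {}) \<union> (if B then {n+v} else {}) \<union> (if C v then {2*n} else {})"
  proof (rule set_eqI)
    fix x show "x \<in> {i. i < 2*n+1 \<and> ff n i v C} \<longleftrightarrow> x \<in> (if A then {v} else {}) \<union> (if B then {n+v} else {}) \<union> (if C v then {2*n} else {})"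
      using fv fnv f2n other[of x] v d
      by (cases "x = v"; cases "x = n+v"; cases "x = 2*n") auto
  qed
  have "pp n v (\<lambda>i. ff n i v C) =
    (card ((if A then {v} else {}) \<union> (if B then {n+v} else {}) \<union> (if C v then {2*n} else {})) \<in> {1,2})"
    unfolding pp_def set ..
  also have "\<dots> = (C v \<noteq> (\<forall>u<v. C u))"
    using d Sle Sall unfolding A_def B_def by (cases "C v"; auto)
  finally show ?thesis using v by (simp add: succ_conf_def)
qed

theorem theorem3p3:
  fixes n :: nat
  assumes "2 \<le> n"
  shows "\<exists>(k::nat) E f \<psi>. is_msyds n k E f \<psi> \<and>
           (\<forall>i<k. \<forall>v<n. is_threshold_local E i v (f i v)) \<and>
           (\<forall>v<n. symmetric_fun k (\<psi> v)) \<and>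
           phase_space_single_cycle n (succ_conf n f \<psi>)"
proof (intro exI conjI)
  show "is_msyds n (2*n+1) (EE n) (ff n) (pp n)"
    unfolding is_msyds_def
  proof (intro conjI allI impI)
    fix i u v assume "i < 2*n+1" "EE n i u v"
    then show "u < n" "v < n" "u \<noteq> v" "EE n i v u" using assms
      by (auto simp: EE_def) (meson le_less_trans mod_less_divisor not_less not_numeral_le_zero order.strict_trans2 zero_less_iff_neq_zero)+
  next
    fix i v and C D :: "nat \<Rightarrow> bool" assume "\<forall>u\<in>cnbhd (EE n) i v. C u = D u"
    then have "{u \<in> cnbhd (EE n) i v. C u} = {u \<in> cnbhd (EE n) i v. D u}" by auto
    then show "ff n i v C = ff n i v D" by (simp add: ff_def)
  next
    fix v x y assume "\<forall>i<2*n+1. x i = (y i :: bool)"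
    then have "{i. i < 2*n+1 \<and> x i} = {i. i < 2*n+1 \<and> y i}" by auto
    then show "pp n v x = pp n v y" by (simp add: pp_def)
  qed simp
  show "\<forall>i<2*n+1. \<forall>v<n. is_threshold_local (EE n) i v (ff n i v)"
    unfolding is_threshold_local_def ff_def by blast
  show "\<forall>v<n. symmetric_fun (2*n+1) (pp n v)"
    unfolding symmetric_fun_def pp_def by simp
  define F where "F = succ_conf n (ff n) (pp n)"
  have Fb: "F (bitsn n m) = bitsn n (Suc m)" for m
  proof
    fix v show "F (bitsn n m) v = bitsn n (Suc m) v"
    proof (cases "v < n")
      case True
      then show ?thesis using step[OF assms True, of "bitsn n m"]
        by (simp add: F_def bitsn_def inc)
    next
      case False
      then show ?thesis by (simp add: F_def succ_conf_def bitsn_def)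
    qed
  qed
  have it: "(F ^^ j) (bitsn n 0) = bitsn n j" for j
    by (induction j) (simp_all add: Fb)
  have b2: "bitsn n (2^n) = bitsn n 0"
    by (auto simp: bitsn_def fun_eq_iff bit_exp_iff)
  show "phase_space_single_cycle n (succ_conf n (ff n) (pp n))"
    unfolding phase_space_single_cycle_def F_def[symmetric]
  proof (intro bexI[of _ "bitsn n 0"] conjI)
    show "bitsn n 0 \<in> configs n" by (simp add: bitsn_def configs_def)
    show "(F ^^ 2 ^ n) (bitsn n 0) = bitsn n 0" by (simp add: it b2)
    show "{(F ^^ j) (bitsn n 0) |j. j < 2 ^ n} = configs n"
    proof
      have "(F ^^ j) (bitsn n 0) \<in> configs n" for j
        by (simp only: it) (simp add: bitsn_def configs_def)
      then show "{(F ^^ j) (bitsn n 0) |j. j < 2 ^ n} \<subseteq> configs n"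
        by auto
      show "configs n \<subseteq> {(F ^^ j) (bitsn n 0) |j. j < 2 ^ n}"
        using surj_bits by (fastforce simp: it)
    qed
    show "inj_on (\<lambda>j. (F ^^ j) (bitsn n 0)) {..<2 ^ n}"
    proof (rule inj_onI)
      fix a b assume a: "a \<in> {..<(2::nat)^n}" and b: "b \<in> {..<(2::nat)^n}"
        and e: "(F ^^ a) (bitsn n 0) = (F ^^ b) (bitsn n 0)"
      have e2: "bitsn n a = bitsn n b" using e by (simp only: it)
      have "bit a w = bit b w" for w
      proof (cases "w < n")
        case True then show ?thesis using e2 by (auto simp: bitsn_def fun_eq_iff)
      next
        case False then show ?thesis using small a b by auto
      qed
      then show "a = b" by (simp add: bit_eq_iff)
    qed
  qed
qed

end
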